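(* Let $G$ be a map graph with a corresponding planar bipartite graph $B$, let $\mathcal{D}=(T,\beta_{\mathcal{D}})$ be a nice tree decomposition of $B$, and let $\mathcal{D}'=(T,\beta_{\mathcal{D}'})$ be derived from $\mathcal{D}$ as described in the context. Then for every node $t\in V(T)$, every edge of $G$ with one endpoint in $\gamma_{\mathcal{D}'}(t)$ and the other endpoint in $V(G)\setminus\gamma_{\mathcal{D}'}(t)$ either is incident with a vertex of $\mathsf{Original}(t)$, or belongs to $E(K)$ (the edge set of the clique $K$) for some special clique $K\in\mathsf{Cliques}(t)$.
   Context: All graphs are finite and simple. For a bipartite graph $B$ with bipartition $V(B)=W\uplus U$, the half-square of $B$ is the graph on $W$ in which two vertices are adjacent iff they are at distance exactly $2$ in $B$. A graph $G$ is a map graph iff it is the half-square of some planar bipartite graph $B$; such $B$ (with $W=V(G)$) is a corresponding planar bipartite graph, and $S(G)=U$ is the set of special vertices; for $s\in S(G)$, $N_B(s)$ is a clique of $G$ called a special clique. A tree decomposition $(T,\beta)$: rooted tree, bags covering all vertices and edges, each vertex's nodes inducing a connected subtree. $\gamma_{\mathcal{D}}(t)$ (resp. $\gamma_{\mathcal{D}'}(t)$) is the union of bags of $\mathcal{D}$ (resp. $\mathcal{D}'$) at $t$ and its descendants. A nice tree decomposition has empty root bag and leaf, introduce, forget and join nodes in the standard sense. The derived decomposition $\mathcal{D}'$ has the same tree and $\beta_{\mathcal{D}'}(t)=(\beta_{\mathcal{D}}(t)\cap V(G))\cup\bigcup_{s\in\beta_{\mathcal{D}}(t)\cap S(G)}(N_B(s)\cap\gamma_{\mathcal{D}}(t))$.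 $\mathsf{Original}(t)=\beta_{\mathcal{D}}(t)\cap\beta_{\mathcal{D}'}(t)$, $\mathsf{Fake}(t)=\beta_{\mathcal{D}'}(t)\setminus\beta_{\mathcal{D}}(t)$, $\mathsf{Cliques}(t)=\{N_B(s): s\in S(G)\cap\beta_{\mathcal{D}}(t)\}$. *)

theory Defs
  imports "HOL-Analysis.Analysis"
begin

definition simple_graph :: "'v set \<Rightarrow> 'v set set \<Rightarrow> bool" where
  "simple_graph V E \<longleftrightarrow> finite V \<and>
     (\<forall>e\<in>E. \<exists>u v. e = {u, v} \<and> u \<in> V \<and> v \<in> V \<and> u \<noteq> v)"

definition nbhd :: "'v set set \<Rightarrow> 'v \<Rightarrow> 'v set" where
  "nbhd E s = {x. {s, x} \<in> E}"

definition planar_graph :: "'v set \<Rightarrow> 'v set set \<Rightarrow> bool" where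
  "planar_graph V E \<longleftrightarrow>
    (\<exists>(pos :: 'v \<Rightarrow> real \<times> real) (arcs :: 'v set \<Rightarrow> real \<Rightarrow> real \<times> real).
       inj_on pos V \<and>
       (\<forall>e\<in>E. arc (arcs e) \<and>
          (\<exists>u v. e = {u, v} \<and> pathstart (arcs e) = pos u \<and> pathfinish (arcs e) = pos v)) \<and>
       (\<forall>e\<in>E. \<forall>w\<in>V. pos w \<in> path_image (arcs e) \<longrightarrow> w \<in> e) \<and>
       (\<forall>e\<in>E. \<forall>f\<in>E. e \<noteq> f \<longrightarrow>
          path_image (arcs e) \<inter> path_image (arcs f) \<subseteq> pos ` (e \<inter> f)))"

definition bipartite_graph :: "'v set \<Rightarrow> 'v set \<Rightarrow> 'v set set \<Rightarrow> bool" where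
  "bipartite_graph W U EB \<longleftrightarrow> simple_graph (W \<union> U) EB \<and> W \<inter> U = {} \<and>
     (\<forall>e\<in>EB. \<exists>w u. e = {w, u} \<and> w \<in> W \<and> u \<in> U)"

text \<open>Edges of the half-square of B on W: pairs of vertices of W at distance exactly 2 in B.\<close>
definition half_square_edges :: "'v set \<Rightarrow> 'v set set \<Rightarrow> 'v set set" where
  "half_square_edges W EB =
     {{x, y} | x y. x \<in> W \<and> y \<in> W \<and> x \<noteq> y \<and> {x, y} \<notin> EB \<and>
                   (\<exists>s. {x, s} \<in> EB \<and> {s, y} \<in> EB)}"

definition rooted_tree :: "'n set \<Rightarrow> 'n \<Rightarrow> ('n \<Rightarrow> 'n) \<Rightarrow> bool" where
  "rooted_tree N r par \<longleftrightarrow> finite N \<and> r \<in> N \<and> par r = r \<and>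
     (\<forall>t\<in>N. par t \<in> N \<and> (\<exists>k. (par ^^ k) t = r))"

definition tree_adj :: "('n \<Rightarrow> 'n) \<Rightarrow> 'n \<Rightarrow> 'n \<Rightarrow> bool" where
  "tree_adj par s t \<longleftrightarrow> s \<noteq> t \<and> (par s = t \<or> par t = s)"

definition children :: "'n set \<Rightarrow> 'n \<Rightarrow> ('n \<Rightarrow> 'n) \<Rightarrow> 'n \<Rightarrow> 'n set" where
  "children N r par t = {c \<in> N. c \<noteq> r \<and> par c = t}"

text \<open>Descendants of t, including t itself.\<close>
definition descendants :: "'n set \<Rightarrow> ('n \<Rightarrow> 'n) \<Rightarrow> 'n \<Rightarrow> 'n set" where
  "descendants N par t = {s \<in> N. \<exists>k. (par ^^ k) s = t}"

definition connected_in_tree :: "('n \<Rightarrow> 'n) \<Rightarrow> 'n set \<Rightarrow> bool" where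
  "connected_in_tree par X \<longleftrightarrow> X \<noteq> {} \<and>
     (\<forall>s\<in>X. \<forall>t\<in>X. (s, t) \<in> {(a, b). a \<in> X \<and> b \<in> X \<and> tree_adj par a b}\<^sup>*)"

definition tree_decomposition ::
  "'v set \<Rightarrow> 'v set set \<Rightarrow> 'n set \<Rightarrow> 'n \<Rightarrow> ('n \<Rightarrow> 'n) \<Rightarrow> ('n \<Rightarrow> 'v set) \<Rightarrow> bool" where
  "tree_decomposition V E N r par \<beta> \<longleftrightarrow> rooted_tree N r par \<and>
     (\<forall>t\<in>N. \<beta> t \<subseteq> V) \<and>
     (\<forall>v\<in>V. \<exists>t\<in>N. v \<in> \<beta> t) \<and>
     (\<forall>e\<in>E. \<exists>t\<in>N. e \<subseteq> \<beta> t) \<and>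
     (\<forall>v\<in>V. connected_in_tree par {t \<in> N. v \<in> \<beta> t})"

text \<open>Nice tree decomposition: empty root bag; every node is a leaf (no children,
empty bag), an introduce node, a forget node, or a join node.\<close>
definition nice_tree_decomposition ::
  "'v set \<Rightarrow> 'v set set \<Rightarrow> 'n set \<Rightarrow> 'n \<Rightarrow> ('n \<Rightarrow> 'n) \<Rightarrow> ('n \<Rightarrow> 'v set) \<Rightarrow> bool" where
  "nice_tree_decomposition V E N r par \<beta> \<longleftrightarrow> tree_decomposition V E N r par \<beta> \<and>
     \<beta> r = {} \<and>
     (\<forall>t\<in>N.
        (children N r par t = {} \<and> \<beta> t = {}) \<or>
        (\<exists>c v. children N r par t = {c} \<and> v \<notin> \<beta> c \<and> \<beta> t = insert v (\<beta> c)) \<or>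
        (\<exists>c w. children N r par t = {c} \<and> w \<in> \<beta> c \<and> \<beta> t = \<beta> c - {w}) \<or>
        (\<exists>c1 c2. c1 \<noteq> c2 \<and> children N r par t = {c1, c2} \<and>
                 \<beta> t = \<beta> c1 \<and> \<beta> t = \<beta> c2))"

definition gamma :: "'n set \<Rightarrow> ('n \<Rightarrow> 'n) \<Rightarrow> ('n \<Rightarrow> 'v set) \<Rightarrow> 'n \<Rightarrow> 'v set" where
  "gamma N par \<beta> t = (\<Union>s\<in>descendants N par t. \<beta> s)"

text \<open>The derived decomposition D' (W = V(G), U = S(G)).\<close>
definition derived_bag ::
  "'v set \<Rightarrow> 'v set \<Rightarrow> 'v set set \<Rightarrow> 'n set \<Rightarrow> ('n \<Rightarrow> 'n) \<Rightarrow> ('n \<Rightarrow> 'v set) \<Rightarrow> 'n \<Rightarrow> 'v set" where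
  "derived_bag W U EB N par \<beta> t =
     (\<beta> t \<inter> W) \<union> (\<Union>s\<in>\<beta> t \<inter> U. nbhd EB s \<inter> gamma N par \<beta> t)"

definition Original ::
  "'v set \<Rightarrow> 'v set \<Rightarrow> 'v set set \<Rightarrow> 'n set \<Rightarrow> ('n \<Rightarrow> 'n) \<Rightarrow> ('n \<Rightarrow> 'v set) \<Rightarrow> 'n \<Rightarrow> 'v set" where
  "Original W U EB N par \<beta> t = \<beta> t \<inter> derived_bag W U EB N par \<beta> t"

definition Fake ::
  "'v set \<Rightarrow> 'v set \<Rightarrow> 'v set set \<Rightarrow> 'n set \<Rightarrow> ('n \<Rightarrow> 'n) \<Rightarrow> ('n \<Rightarrow> 'v set) \<Rightarrow> 'n \<Rightarrow> 'v set" where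
  "Fake W U EB N par \<beta> t = derived_bag W U EB N par \<beta> t - \<beta> t"

definition Cliques :: "'v set \<Rightarrow> 'v set set \<Rightarrow> ('n \<Rightarrow> 'v set) \<Rightarrow> 'n \<Rightarrow> 'v set set" where
  "Cliques U EB \<beta> t = {nbhd EB s | s. s \<in> U \<and> s \<in> \<beta> t}"

definition clique_edges :: "'v set set \<Rightarrow> 'v set \<Rightarrow> 'v set set" where
  "clique_edges EG K = {e \<in> EG. e \<subseteq> K}"

end

theory Submission
  imports Defs
begin

lemma desc_trans:
  assumes "s \<in> descendants N par t" "s' \<in> descendants N par s"
  shows "s' \<in> descendants N par t"
proof -
  obtain k where k: "(par ^^ k) s = t" using assms(1) unfolding descendants_def by auto
  obtain j where j: "(par ^^ j) s' = s" "s' \<in> N" using assms(2) unfolding descendants_def by auto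
  have "(par ^^ (k + j)) s' = t" using k j by (simp add: funpow_add)
  then show ?thesis using j unfolding descendants_def by auto
qed

lemma cross_lemma:
  assumes "(a, b) \<in> {(p, q). p \<in> X \<and> q \<in> X \<and> tree_adj par p q}\<^sup>*"
    and "X \<subseteq> N"
    and "a \<in> descendants N par t" and "b \<notin> descendants N par t"
  shows "t \<in> X"
  using assms
proof (induction rule: rtrancl_induct)
  case base
  then show ?case by simp
next
  case (step m b)
  show ?case
  proof (cases "m \<in> descendants N par t")
    case False
    then show ?thesis using step by auto
  next
    case True
    then obtain k where k: "(par ^^ k) m = t" unfolding descendants_def by auto
    have mX: "m \<in> X" "b \<in> X" "tree_adj par m b" using step(2) by auto
    show ?thesis
    proof (cases "par m = b")
      case True
      show ?thesis
      proof (cases k)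
        case 0 then show ?thesis using k mX by simp
      next
        case (Suc j)
        then have "(par ^^ j) b = t" using k True by (simp only: funpow_Suc_right o_apply)
        then have "b \<in> descendants N par t" using mX assms(2) unfolding descendants_def by auto
        then show ?thesis using step by simp
      qed
    next
      case False
      then have "par b = m" using mX(3) unfolding tree_adj_def by auto
      then have "(par ^^ (Suc k)) b = t" using k by (simp only: funpow_Suc_right o_apply)
      then have "b \<in> descendants N par t" using mX assms(2) unfolding descendants_def by blast
      then show ?thesis using step by simp
    qed
  qed
qed

lemma in_t:
  assumes td: "tree_decomposition V E N r par \<beta>" and v: "v \<in> V"
    and a: "a \<in> descendants N par t" "v \<in> \<beta> a"
    and b: "b \<in> N" "b \<notin> descendants N par t" "v \<in> \<beta> b"
  shows "v \<in> \<beta> t"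
proof -
  let ?X = "{s \<in> N. v \<in> \<beta> s}"
  have c: "connected_in_tree par ?X" using td v unfolding tree_decomposition_def by auto
  have aN: "a \<in> N" using a unfolding descendants_def by auto
  have "(a, b) \<in> {(p, q). p \<in> ?X \<and> q \<in> ?X \<and> tree_adj par p q}\<^sup>*"
    using c aN a b unfolding connected_in_tree_def by auto
  then have "t \<in> ?X" by (rule cross_lemma[where N=N]) (use a b in auto)
  then show ?thesis by simp
qed

theorem lemma16:
  fixes W U :: "'v set" and EB :: "'v set set"
    and VG :: "'v set" and EG :: "'v set set"
    and N :: "'n set" and r :: 'n and par :: "'n \<Rightarrow> 'n" and \<beta> :: "'n \<Rightarrow> 'v set"
  assumes B_bip: "bipartite_graph W U EB"
    and B_planar: "planar_graph (W \<union> U) EB"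
    and G_V: "VG = W"
    and G_E: "EG = half_square_edges W EB"
    and nice: "nice_tree_decomposition (W \<union> U) EB N r par \<beta>"
    and t: "t \<in> N"
    and e: "{x, y} \<in> EG"
    and x: "x \<in> gamma N par (derived_bag W U EB N par \<beta>) t"
    and y: "y \<in> VG - gamma N par (derived_bag W U EB N par \<beta>) t"
  shows "(x \<in> Original W U EB N par \<beta> t \<or> y \<in> Original W U EB N par \<beta> t) \<or>
         (\<exists>K\<in>Cliques U EB \<beta> t. {x, y} \<in> clique_edges EG K)"
proof -
  have td: "tree_decomposition (W \<union> U) EB N r par \<beta>"
    using nice unfolding nice_tree_decomposition_def by auto
  have disj: "W \<inter> U = {}" using B_bip unfolding bipartite_graph_def by auto
  obtain u where xW: "x \<in> W" and yW: "y \<in> W" and xu: "{x, u} \<in> EB" and uy: "{u, y} \<in> EB"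
  proof -
    obtain a c s where h: "{x, y} = {a, c}" "a \<in> W" "c \<in> W" "{a, s} \<in> EB" "{s, c} \<in> EB"
      using e unfolding G_E half_square_edges_def by blast
    then have "(x = a \<and> y = c) \<or> (x = c \<and> y = a)" by (auto simp: doubleton_eq_iff)
    then show ?thesis using h that by (auto simp: insert_commute)
  qed
  have uU: "u \<in> U"
  proof -
    obtain w u' where "{x, u} = {w, u'}" "w \<in> W" "u' \<in> U"
      using xu B_bip unfolding bipartite_graph_def by blast
    then show ?thesis using xW disj unfolding doubleton_eq_iff by auto
  qed
  obtain s where s: "s \<in> descendants N par t" "x \<in> derived_bag W U EB N par \<beta> s"
    using x unfolding gamma_def by auto
  have sN: "s \<in> N" using s(1) unfolding descendants_def by auto
  have "(par ^^ 0) s = s" by simp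
  then have sd: "s \<in> descendants N par s" using sN unfolding descendants_def by blast
  have "x \<in> \<beta> s \<or> x \<in> gamma N par \<beta> s" using s(2) unfolding derived_bag_def by auto
  then have "x \<in> gamma N par \<beta> s" using sd unfolding gamma_def by auto
  then obtain d where d: "d \<in> descendants N par t" "x \<in> \<beta> d"
  proof -
    obtain d where "d \<in> descendants N par s" "x \<in> \<beta> d"
      using \<open>x \<in> gamma N par \<beta> s\<close> unfolding gamma_def by auto
    then show ?thesis using desc_trans[OF s(1)] that by blast
  qed
  have ynot: "y \<notin> \<beta> s'" if "s' \<in> descendants N par t" for s'
  proof
    assume "y \<in> \<beta> s'"
    then have "y \<in> derived_bag W U EB N par \<beta> s'" using yW unfolding derived_bag_def by auto
    then show False using y that unfolding gamma_def by auto
  qed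
  obtain b where b: "b \<in> N" "{u, y} \<subseteq> \<beta> b" using td uy unfolding tree_decomposition_def by blast
  have bnd: "b \<notin> descendants N par t" using ynot b by auto
  show ?thesis
  proof (cases "\<exists>d'\<in>descendants N par t. u \<in> \<beta> d'")
    case True
    then obtain d' where d': "d' \<in> descendants N par t" "u \<in> \<beta> d'" by auto
    have "u \<in> \<beta> t" by (rule in_t[OF td _ d' b(1) bnd]) (use uU b in auto)
    then have K: "nbhd EB u \<in> Cliques U EB \<beta> t" using uU unfolding Cliques_def by auto
    have "{x, y} \<in> clique_edges EG (nbhd EB u)"
      using e xu uy unfolding clique_edges_def nbhd_def by (auto simp: insert_commute)
    then show ?thesis using K by blast
  next
    case False
    obtain b' where b': "b' \<in> N" "{x, u} \<subseteq> \<beta> b'" using td xu unfolding tree_decomposition_def by blast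
    have "b' \<notin> descendants N par t" using False b' by auto
    then have "x \<in> \<beta> t" using in_t[OF td _ d b'(1)] xW b' by auto
    then have "x \<in> Original W U EB N par \<beta> t" using xW
      unfolding Original_def derived_bag_def by auto
    then show ?thesis by simp
  qed
qed

end
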